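(* In the arrow category $\mathrm{Arr}(\mathrm{Ab})$ of abelian groups (i.e. $\mathscr{A}^\mathbb{T}$ with $\mathscr{A}=\mathrm{Ab}$, $\mathbb{T}$ the walking arrow $1\to0$, $\mathbb{S}=\{0\}$, so that $\mathscr{F}$ consists of arrows $0\to A$ and the reflection sends $a:A_1\to A_0$ to $\mathrm{Cok}(a)$), the morphism of arrows $(f_0,f_1)$ from $1_\mathbb{Z}:\mathbb{Z}\to\mathbb{Z}$ to $\mathbb{Z}\to0$ with $f_1=1_\mathbb{Z}$ and $f_0:\mathbb{Z}\to0$ is an extension which is central but not trivial with respect to $\mathscr{F}$. Consequently the torsion class $\mathscr{T}$ of the torsion theory $(\mathscr{T},\mathscr{F})$ in $\mathrm{Arr}(\mathrm{Ab})$ is not closed under regular subobjects.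
   Context: An extension in $\mathrm{Arr}(\mathscr{A})$ from $a:A_1\to A_0$ to $b:B_1\to B_0$ is a commutative square $(f_0,f_1)$ with $f_0,f_1$ regular epimorphisms. It is trivial if the naturality square of the unit of the reflection into $\mathscr{F}$ is a pullback; central if its pullback along some regular epimorphism $p$ is trivial. $\mathscr{T}$ consists of the arrows $a:A_1\to A_0$ that are epimorphisms (the torsion class of the torsion theory whose torsion-free class is $\mathscr{F}$). *)

theory Defs
  imports "HOL-Algebra.Elementary_Groups" "HOL-Algebra.Coset"
begin

definition arr_obj :: "('a,'x) monoid_scheme \<Rightarrow> ('b,'y) monoid_scheme \<Rightarrow> ('a \<Rightarrow> 'b) \<Rightarrow> bool" where
  "arr_obj A1 A0 a \<longleftrightarrow> comm_group A1 \<and> comm_group A0 \<and> a \<in> hom A1 A0"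

definition arr_mor ::
  "('a,'x) monoid_scheme \<Rightarrow> ('b,'y) monoid_scheme \<Rightarrow> ('a \<Rightarrow> 'b) \<Rightarrow>
   ('c,'z) monoid_scheme \<Rightarrow> ('d,'w) monoid_scheme \<Rightarrow> ('c \<Rightarrow> 'd) \<Rightarrow>
   ('a \<Rightarrow> 'c) \<Rightarrow> ('b \<Rightarrow> 'd) \<Rightarrow> bool" where
  "arr_mor A1 A0 a B1 B0 b f1 f0 \<longleftrightarrow>
     arr_obj A1 A0 a \<and> arr_obj B1 B0 b \<and> f1 \<in> hom A1 B1 \<and> f0 \<in> hom A0 B0 \<and>
     (\<forall>x\<in>carrier A1. b (f1 x) = f0 (a x))"

definition ab_regular_epi :: "('a,'x) monoid_scheme \<Rightarrow> ('b,'y) monoid_scheme \<Rightarrow> ('a \<Rightarrow> 'b) \<Rightarrow> bool" where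
  "ab_regular_epi A B f \<longleftrightarrow> f \<in> hom A B \<and> f ` carrier A = carrier B"

definition ab_regular_mono :: "('a,'x) monoid_scheme \<Rightarrow> ('b,'y) monoid_scheme \<Rightarrow> ('a \<Rightarrow> 'b) \<Rightarrow> bool" where
  "ab_regular_mono A B f \<longleftrightarrow> f \<in> hom A B \<and> inj_on f (carrier A)"

definition extension ::
  "('a,'x) monoid_scheme \<Rightarrow> ('b,'y) monoid_scheme \<Rightarrow> ('a \<Rightarrow> 'b) \<Rightarrow>
   ('c,'z) monoid_scheme \<Rightarrow> ('d,'w) monoid_scheme \<Rightarrow> ('c \<Rightarrow> 'd) \<Rightarrow>
   ('a \<Rightarrow> 'c) \<Rightarrow> ('b \<Rightarrow> 'd) \<Rightarrow> bool" where
  "extension A1 A0 a B1 B0 b f1 f0 \<longleftrightarrow>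
     arr_mor A1 A0 a B1 B0 b f1 f0 \<and> ab_regular_epi A1 B1 f1 \<and> ab_regular_epi A0 B0 f0"

text \<open>Regular monomorphism (regular subobject) in Arr(Ab): a morphism of arrows whose
  components are regular monos (limits, hence regular monos, in Arr(Ab) are componentwise).\<close>

definition arr_regular_mono ::
  "('a,'x) monoid_scheme \<Rightarrow> ('b,'y) monoid_scheme \<Rightarrow> ('a \<Rightarrow> 'b) \<Rightarrow>
   ('c,'z) monoid_scheme \<Rightarrow> ('d,'w) monoid_scheme \<Rightarrow> ('c \<Rightarrow> 'd) \<Rightarrow>
   ('a \<Rightarrow> 'c) \<Rightarrow> ('b \<Rightarrow> 'd) \<Rightarrow> bool" where
  "arr_regular_mono A1 A0 a B1 B0 b f1 f0 \<longleftrightarrow>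
     arr_mor A1 A0 a B1 B0 b f1 f0 \<and> ab_regular_mono A1 B1 f1 \<and> ab_regular_mono A0 B0 f0"

definition ab_pullback_square ::
  "('p,'s) monoid_scheme \<Rightarrow> ('x,'t) monoid_scheme \<Rightarrow> ('y,'u) monoid_scheme \<Rightarrow> ('z,'v) monoid_scheme \<Rightarrow>
   ('p \<Rightarrow> 'x) \<Rightarrow> ('p \<Rightarrow> 'y) \<Rightarrow> ('x \<Rightarrow> 'z) \<Rightarrow> ('y \<Rightarrow> 'z) \<Rightarrow> bool" where
  "ab_pullback_square P X Y Z p1 p2 g h \<longleftrightarrow>
     (\<forall>w\<in>carrier P. g (p1 w) = h (p2 w)) \<and>
     bij_betw (\<lambda>w. (p1 w, p2 w)) (carrier P)
        {(u, v). u \<in> carrier X \<and> v \<in> carrier Y \<and> g u = h v}"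

definition ab_pb :: "('a,'x) monoid_scheme \<Rightarrow> ('e,'y) monoid_scheme \<Rightarrow> ('a \<Rightarrow> 'c) \<Rightarrow> ('e \<Rightarrow> 'c)
                     \<Rightarrow> ('a \<times> 'e) monoid" where
  "ab_pb A E f p =
     \<lparr> carrier = {(u, v). u \<in> carrier A \<and> v \<in> carrier E \<and> f u = p v},
       monoid.mult = (\<lambda>(u, v) (u', v'). (u \<otimes>\<^bsub>A\<^esub> u', v \<otimes>\<^bsub>E\<^esub> v')),
       one = (\<one>\<^bsub>A\<^esub>, \<one>\<^bsub>E\<^esub>) \<rparr>"

definition zero_grp :: "unit monoid" where
  "zero_grp = \<lparr> carrier = {()}, monoid.mult = (\<lambda>_ _. ()), one = () \<rparr>"

text \<open>Cok(a) = A0 / Im a, with quotient map (level-0 component of the unit \<eta>_A);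
  level-1 component of the unit is A1 \<rightarrow> 0. The object I(A) is the arrow 0 \<rightarrow> Cok a.\<close>

definition cok :: "('a,'x) monoid_scheme \<Rightarrow> ('b,'y) monoid_scheme \<Rightarrow> ('a \<Rightarrow> 'b) \<Rightarrow> ('b set) monoid" where
  "cok A1 A0 a = A0 Mod (a ` carrier A1)"

definition cok_quot :: "('a,'x) monoid_scheme \<Rightarrow> ('b,'y) monoid_scheme \<Rightarrow> ('a \<Rightarrow> 'b) \<Rightarrow> 'b \<Rightarrow> 'b set" where
  "cok_quot A1 A0 a y = (a ` carrier A1) #>\<^bsub>A0\<^esub> y"

definition refl_arrow :: "('a,'x) monoid_scheme \<Rightarrow> ('b,'y) monoid_scheme \<Rightarrow> ('a \<Rightarrow> 'b) \<Rightarrow> unit \<Rightarrow> 'b set" where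
  "refl_arrow A1 A0 a = (\<lambda>_. \<one>\<^bsub>cok A1 A0 a\<^esub>)"

text \<open>I(f) at level 0: Cok a \<rightarrow> Cok b, the coset C \<mapsto> Im b \<cdot> f0(C) (= [f0 x] for x \<in> C).\<close>

definition cok_map ::
  "('c,'z) monoid_scheme \<Rightarrow> ('d,'w) monoid_scheme \<Rightarrow> ('c \<Rightarrow> 'd) \<Rightarrow> ('b \<Rightarrow> 'd) \<Rightarrow> 'b set \<Rightarrow> 'd set" where
  "cok_map B1 B0 b f0 C = (b ` carrier B1) <#>\<^bsub>B0\<^esub> (f0 ` C)"

text \<open>Trivial extension: the naturality square of the unit,
     A --\<eta>_A--> I(A)
     |f           |I(f)
     B --\<eta>_B--> I(B)
  is a pullback in Arr(Ab), i.e. levelwise a pullback in Ab.\<close>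

definition trivial_ext ::
  "('a,'x) monoid_scheme \<Rightarrow> ('b,'y) monoid_scheme \<Rightarrow> ('a \<Rightarrow> 'b) \<Rightarrow>
   ('c,'z) monoid_scheme \<Rightarrow> ('d,'w) monoid_scheme \<Rightarrow> ('c \<Rightarrow> 'd) \<Rightarrow>
   ('a \<Rightarrow> 'c) \<Rightarrow> ('b \<Rightarrow> 'd) \<Rightarrow> bool" where
  "trivial_ext A1 A0 a B1 B0 b f1 f0 \<longleftrightarrow>
     extension A1 A0 a B1 B0 b f1 f0 \<and>
     ab_pullback_square A1 zero_grp B1 zero_grp (\<lambda>_. ()) f1 (\<lambda>_. ()) (\<lambda>_. ()) \<and>
     ab_pullback_square A0 (cok A1 A0 a) B0 (cok B1 B0 b)
        (cok_quot A1 A0 a) f0 (cok_map B1 B0 b f0) (cok_quot B1 B0 b)"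

text \<open>Since HOL cannot quantify over types inside a formula,
  the element types of E are fixed by the TYPE argument.\<close>

definition central_ext ::
  "'e1 itself \<Rightarrow> 'e0 itself \<Rightarrow>
   ('a,'x) monoid_scheme \<Rightarrow> ('b,'y) monoid_scheme \<Rightarrow> ('a \<Rightarrow> 'b) \<Rightarrow>
   ('c,'z) monoid_scheme \<Rightarrow> ('d,'w) monoid_scheme \<Rightarrow> ('c \<Rightarrow> 'd) \<Rightarrow>
   ('a \<Rightarrow> 'c) \<Rightarrow> ('b \<Rightarrow> 'd) \<Rightarrow> bool" where
  "central_ext (_ :: 'e1 itself) (_ :: 'e0 itself) A1 A0 a B1 B0 b f1 f0 \<longleftrightarrow>
     extension A1 A0 a B1 B0 b f1 f0 \<and>
     (\<exists>(E1 :: 'e1 monoid) (E0 :: 'e0 monoid) e p1 p0.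
        extension E1 E0 e B1 B0 b p1 p0 \<and>
        trivial_ext (ab_pb A1 E1 f1 p1) (ab_pb A0 E0 f0 p0) (\<lambda>(u, v). (a u, e v))
                    E1 E0 e snd snd)"

definition in_T :: "('a,'x) monoid_scheme \<Rightarrow> ('b,'y) monoid_scheme \<Rightarrow> ('a \<Rightarrow> 'b) \<Rightarrow> bool" where
  "in_T A1 A0 a \<longleftrightarrow> arr_obj A1 A0 a \<and> a ` carrier A1 = carrier A0"

definition zero_int_group :: "int monoid" where
  "zero_int_group = \<lparr> carrier = {0}, monoid.mult = (+), one = 0 \<rparr>"

end

theory Submission
  imports Defs
begin

lemma zig_comm: "comm_group zero_int_group"
  unfolding zero_int_group_def
  by (rule comm_groupI) auto

lemma zig_simps[simp]: "carrier zero_int_group = {0}" "x \<otimes>\<^bsub>zero_int_group\<^esub> y = x + y"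
  "\<one>\<^bsub>zero_int_group\<^esub> = 0"
  by (auto simp: zero_int_group_def)

lemma Z_comm: "comm_group integer_group" by (rule abelian_integer_group)

lemma part1: "extension integer_group integer_group id integer_group zero_int_group (\<lambda>_. 0) id (\<lambda>_. 0)"
  unfolding extension_def arr_mor_def arr_obj_def ab_regular_epi_def
  by (auto simp: Z_comm zig_comm intro!: homI)

lemma rcos_UNIV: "UNIV #>\<^bsub>integer_group\<^esub> y = UNIV"
  unfolding r_coset_def by (auto intro!: exI[of _ "x - y" for x])

lemma part3: "\<not> trivial_ext integer_group integer_group id integer_group zero_int_group (\<lambda>_. 0) id (\<lambda>_. 0)"
proof
  assume "trivial_ext integer_group integer_group id integer_group zero_int_group (\<lambda>_. 0) id (\<lambda>_. 0)"
  then have "inj_on (\<lambda>w. (cok_quot integer_group integer_group id w, (\<lambda>_. 0::int) w)) UNIV"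
    unfolding trivial_ext_def ab_pullback_square_def bij_betw_def by simp
  moreover have "cok_quot integer_group integer_group id 0 = cok_quot integer_group integer_group id 1"
    unfolding cok_quot_def by (simp add: rcos_UNIV)
  ultimately have "(0::int) = 1" by (metis (no_types, lifting) UNIV_I inj_onD)
  then show False by simp
qed

lemma part4: "\<exists>(X1 :: int monoid) (X0 :: int monoid) x (S1 :: int monoid) (S0 :: int monoid) s m1 m0.
             in_T X1 X0 x \<and> arr_regular_mono S1 S0 s X1 X0 x m1 m0 \<and> \<not> in_T S1 S0 s"
proof (intro exI conjI)
  show "in_T integer_group integer_group id"
    unfolding in_T_def arr_obj_def by (auto simp: Z_comm intro!: homI)
  show "arr_regular_mono zero_int_group integer_group (\<lambda>_. 0) integer_group integer_group id id id"
    unfolding arr_regular_mono_def arr_mor_def arr_obj_def ab_regular_mono_def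
    by (auto simp: Z_comm zig_comm intro!: homI)
  show "\<not> in_T zero_int_group integer_group (\<lambda>_. 0)"
    unfolding in_T_def by (auto simp: set_eq_iff intro!: exI[of _ 1])
qed

definition "P1 = ab_pb integer_group integer_group (id::int\<Rightarrow>int) (id::int\<Rightarrow>int)"
definition "P0 = ab_pb integer_group integer_group (\<lambda>_::int. 0::int) (\<lambda>_::int. 0::int)"

lemma P1_simps[simp]: "carrier P1 = {(u,v). u = v}" "x \<otimes>\<^bsub>P1\<^esub> y = (fst x + fst y, snd x + snd y)"
  "\<one>\<^bsub>P1\<^esub> = (0,0)"
  by (auto simp: P1_def ab_pb_def split: prod.splits)

lemma P0_simps[simp]: "carrier P0 = UNIV" "x \<otimes>\<^bsub>P0\<^esub> y = (fst x + fst y, snd x + snd y)"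
  "\<one>\<^bsub>P0\<^esub> = (0,0)"
  by (auto simp: P0_def ab_pb_def split: prod.splits)

lemma P1_comm: "comm_group P1"
  by (rule comm_groupI) (auto, presburger)

lemma P0_comm: "comm_group P0"
  by (rule comm_groupI) (auto, presburger+)

lemma img: "(\<lambda>(u, v). (id u, id v)) ` carrier P1 = {(u,v). u = v}"
  by auto

lemma coset_P0: "{(u::int,v). u = v} #>\<^bsub>P0\<^esub> w = {(x,y). x - y = fst w - snd w}"
  unfolding r_coset_def
  apply (auto simp: case_prod_beta)
  subgoal for a b by (rule exI[of _ "a - fst w"]) auto
  done

lemma cokmap_UNIV: "C \<noteq> {} \<Longrightarrow> cok_map integer_group integer_group id f C = UNIV"
  unfolding cok_map_def set_mult_def
  by auto (metis diff_add_cancel ex_in_conv)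

lemma part2: "central_ext TYPE(int) TYPE(int)
           integer_group integer_group id integer_group zero_int_group (\<lambda>_. 0) id (\<lambda>_. 0)"
  unfolding central_ext_def
proof (intro conjI exI)
  show "extension integer_group integer_group id integer_group zero_int_group (\<lambda>_. 0) id (\<lambda>_. 0)"
    by (rule part1)
  show "extension integer_group integer_group id integer_group zero_int_group (\<lambda>_. 0) id (\<lambda>_. 0)"
    by (rule part1)
  have ext: "extension P1 P0 (\<lambda>(u, v). (id u, id v)) integer_group integer_group id snd snd"
    unfolding extension_def arr_mor_def arr_obj_def ab_regular_epi_def
    by (auto simp: Z_comm P1_comm P0_comm intro!: homI image_eqI[of _ snd "(x,x)" for x])
  have sq1: "ab_pullback_square P1 zero_grp integer_group zero_grp (\<lambda>_. ()) snd (\<lambda>_. ()) (\<lambda>_. ())"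
    unfolding ab_pullback_square_def zero_grp_def bij_betw_def inj_on_def
    by (auto intro!: image_eqI[of _ _ "(x,x)" for x])
  have cq: "cok_quot P1 P0 (\<lambda>(u, v). (id u, id v)) w = {(x,y). x - y = fst w - snd w}" for w
    unfolding cok_quot_def img coset_P0 ..
  have cqZ: "cok_quot integer_group integer_group id y = UNIV" for y
    unfolding cok_quot_def by (simp add: rcos_UNIV)
  have ne: "{(x::int,y). x - y = c} \<noteq> {}" for c
  proof
    assume "{(x::int,y). x - y = c} = {}"
    moreover have "(c, 0) \<in> {(x::int,y). x - y = c}" by simp
    ultimately show False by blast
  qed
  have carr: "carrier (cok P1 P0 (\<lambda>(u, v). (id u, id v))) = range (\<lambda>w. {(x::int,y). x - y = fst w - snd w})"
    unfolding cok_def FactGroup_def RCOSETS_def img coset_P0 by auto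
  have sq0: "ab_pullback_square P0 (cok P1 P0 (\<lambda>(u, v). (id u, id v))) integer_group
     (cok integer_group integer_group id)
     (cok_quot P1 P0 (\<lambda>(u, v). (id u, id v))) snd (cok_map integer_group integer_group id snd)
     (cok_quot integer_group integer_group id)"
    unfolding ab_pullback_square_def
  proof (intro conjI ballI)
    show "cok_map integer_group integer_group id snd (cok_quot P1 P0 (\<lambda>(u, v). (id u, id v)) w) =
         cok_quot integer_group integer_group id (snd w)" for w
      unfolding cq cqZ using ne by (simp add: cokmap_UNIV)
    show "bij_betw (\<lambda>w. (cok_quot P1 P0 (\<lambda>(u, v). (id u, id v)) w, snd w)) (carrier P0)
     {(u, v). u \<in> carrier (cok P1 P0 (\<lambda>(u, v). (id u, id v))) \<and> v \<in> carrier integer_group \<and>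
        cok_map integer_group integer_group id snd u = cok_quot integer_group integer_group id v}"
      unfolding cq cqZ carr bij_betw_def
    proof (intro conjI)
      show "inj_on (\<lambda>w. ({(x, y). x - y = fst w - snd w}, snd w)) (carrier P0)"
      proof (rule inj_onI)
        fix w w' :: "int \<times> int"
        assume h: "({(x, y). x - y = fst w - snd w}, snd w) = ({(x, y). x - y = fst w' - snd w'}, snd w')"
        have e: "{(x::int, y). x - y = fst w - snd w} = {(x, y). x - y = fst w' - snd w'}"
          using h[unfolded prod.inject] by (rule conjunct1)
        have s: "snd w = snd w'" using h[unfolded prod.inject] by (rule conjunct2)
        have "(fst w - snd w, 0) \<in> {(x::int, y). x - y = fst w - snd w}" by simp
        then have "(fst w - snd w, 0) \<in> {(x::int, y). x - y = fst w' - snd w'}" by (simp only: e)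
        then have "fst w - snd w = fst w' - snd w'" by simp
        with s show "w = w'" by (simp add: prod_eq_iff)
      qed
      show "(\<lambda>w::int\<times>int. ({(x, y). x - y = fst w - snd w}, snd w)) ` carrier P0 =
        {(u, v). u \<in> range (\<lambda>w::int\<times>int. {(x, y). x - y = fst w - snd w}) \<and> v \<in> carrier integer_group \<and>
           cok_map integer_group integer_group id snd u = UNIV}"
      proof (intro Set.set_eqI iffI)
        fix z :: "(int \<times> int) set \<times> int" assume "z \<in> (\<lambda>w::int\<times>int. ({(x, y). x - y = fst w - snd w}, snd w)) ` carrier P0"
        then show "z \<in> {(u, v). u \<in> range (\<lambda>w::int\<times>int. {(x, y). x - y = fst w - snd w}) \<and> v \<in> carrier integer_group \<and>
           cok_map integer_group integer_group id snd u = UNIV}"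
          using ne by (auto simp: cokmap_UNIV)
      next
        fix z :: "(int \<times> int) set \<times> int" assume "z \<in> {(u, v). u \<in> range (\<lambda>w. {(x::int, y::int). x - y = fst w - snd w}) \<and> v \<in> carrier integer_group \<and>
           cok_map integer_group integer_group id snd u = UNIV}"
        then obtain w and v :: int where z: "z = ({(x, y). x - y = fst w - snd w}, v)" by auto
        show "z \<in> (\<lambda>w::int\<times>int. ({(x, y). x - y = fst w - snd w}, snd w)) ` carrier P0"
          unfolding z by (rule image_eqI[of _ _ "(fst w - snd w + v, v)"]) auto
      qed
    qed
  qed
  show "trivial_ext (ab_pb integer_group integer_group (id::int\<Rightarrow>int) (id::int\<Rightarrow>int)) (ab_pb integer_group integer_group (\<lambda>_::int. 0::int) (\<lambda>_::int. 0::int))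
     (\<lambda>(u, v). (id u, id v)) integer_group integer_group id snd snd"
    using ext sq1 sq0 unfolding trivial_ext_def P1_def P0_def by blast
qed

theorem mainTheorem5:
  shows "extension integer_group integer_group id integer_group zero_int_group (\<lambda>_. 0) id (\<lambda>_. 0)
       \<and> central_ext TYPE(int) TYPE(int)
           integer_group integer_group id integer_group zero_int_group (\<lambda>_. 0) id (\<lambda>_. 0)
       \<and> \<not> trivial_ext integer_group integer_group id integer_group zero_int_group (\<lambda>_. 0) id (\<lambda>_. 0)
       \<and> (\<exists>(X1 :: int monoid) (X0 :: int monoid) x (S1 :: int monoid) (S0 :: int monoid) s m1 m0.
             in_T X1 X0 x \<and> arr_regular_mono S1 S0 s X1 X0 x m1 m0 \<and> \<not> in_T S1 S0 s)"
  using part1 part2 part3 part4 by blast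

end
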